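(* Let $\nu=(\nu_1,\ldots,\nu_p)$ be a vector of $p$-orthogonality for $\{P_n\}$, and let $\{P^{(p)}_n\}$ be the sequence associated with the Darboux transformation $J^{(p)}$ of some Darboux factorization of $J-CI$. Then $\nu^{(p)}=\big((z-C)\nu_1,(z-C)\nu_2,\ldots,(z-C)\nu_p\big)$ is a vector of $p$-orthogonality for $\{P^{(p)}_n\}$.
   Context: Fix $p\in\mathbb{N}$. Let $J=(a_{n,m})_{n,m\ge0}$ be an infinite matrix with $a_{n,n+1}=1$, $a_{n,m}=0$ for $m>n+1$ or $m<n-p$, and $a_{n+p,n}\neq0$ for all $n\ge0$. Define polynomials by $P_{-p}=\cdots=P_{-1}=0$, $P_0\equiv1$, $P_{n+1}(z)=(z-a_{n,n})P_n(z)-\sum_{i=1}^p a_{n,n-i}P_{n-i}(z)$ for $n\ge0$. Fix $C\in\mathbb{C}$ with $P_n(C)\neq0$ for all $n\ge1$. A Darboux factorization of $J-CI$ is a factorization $J-CI=L^{(1)}L^{(2)}\cdots L^{(p)}U$ where, indexing rows and columns by $1,2,\ldots$, $U$ is upper bidiagonal with $U_{k,k}=\gamma_{(k-1)(p+1)+1}$, $U_{k,k+1}=1$, and for $j=1,\ldots,p$, $L^{(j)}$ is lower bidiagonal with ones on the diagonal and $L^{(j)}_{k+1,k}=\gamma_{(k-1)(p+1)+j+1}\neq0$ for all $k\ge1$. The Darboux transformation $J^{(p)}=CI+UL^{(1)}\cdots L^{(p)}$ is lower Hessenberg with ones on the superdiagonal, and $\{P^{(p)}_n\}_{n\ge0}$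 is the unique sequence of polynomials with $P^{(p)}_0\equiv1$ such that $v(z)=(P^{(p)}_0(z),P^{(p)}_1(z),\ldots)^T$ satisfies $J^{(p)}v(z)=zv(z)$. A vector of $p$-orthogonality for a sequence of polynomials $\{Q_n\}$ is a vector $(\nu_1,\ldots,\nu_p)$ of linear functionals on polynomials with, for each $r=1,\ldots,p$ and $k=0,1,\ldots$: $\nu_r[z^kQ_n]=0$ for all $n\ge kp+r$, and $\nu_r[z^kQ_{kp+r-1}]\neq0$. For a functional $\mu$, $(z-C)\mu$ is the functional $q\mapsto\mu[(z-C)q]$. *)

theory Defs
  imports "HOL-Computational_Algebra.Polynomial"
begin

text \<open>Infinite matrices are functions nat => nat => complex, indexed from 0
  (row/column k here corresponds to row/column k+1 in the paper).\<close>

type_synonym imat = "nat \<Rightarrow> nat \<Rightarrow> complex"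

text \<open>Product of infinite matrices, for row-finite left factor
  (all matrices occurring here are banded, so this is the usual product).\<close>
definition mmul :: "imat \<Rightarrow> imat \<Rightarrow> imat" where
  "mmul A B i k = (\<Sum>j\<in>{j. A i j \<noteq> 0}. A i j * B j k)"

definition imat_id :: imat where
  "imat_id i k = (if i = k then 1 else 0)"

text \<open>Upper bidiagonal factor U: U(k,k) = gamma((k-1)(p+1)+1), U(k,k+1) = 1 (paper, 1-based).\<close>
definition Umat :: "nat \<Rightarrow> (nat \<Rightarrow> complex) \<Rightarrow> imat" where
  "Umat p \<gamma> i k = (if k = i then \<gamma> (i * (p + 1) + 1)
                    else if k = i + 1 then 1 else 0)"

text \<open>Lower bidiagonal factor L^(j): ones on diagonal, L(k+1,k) = gamma((k-1)(p+1)+j+1) (paper, 1-based).\<close>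
definition Lmat :: "nat \<Rightarrow> (nat \<Rightarrow> complex) \<Rightarrow> nat \<Rightarrow> imat" where
  "Lmat p \<gamma> j i k = (if i = k then 1
                      else if i = k + 1 then \<gamma> (k * (p + 1) + j + 1) else 0)"

definition Lprod :: "nat \<Rightarrow> (nat \<Rightarrow> complex) \<Rightarrow> imat \<Rightarrow> imat" where
  "Lprod p \<gamma> M = foldr (\<lambda>j N. mmul (Lmat p \<gamma> j) N) [1..<p+1] M"

definition darboux_factorization :: "nat \<Rightarrow> imat \<Rightarrow> complex \<Rightarrow> (nat \<Rightarrow> complex) \<Rightarrow> bool" where
  "darboux_factorization p J C \<gamma> \<longleftrightarrow>
     (\<forall>j\<in>{1..p}. \<forall>k. \<gamma> (k * (p + 1) + j + 1) \<noteq> 0) \<and>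
     (\<forall>i k. J i k - (if i = k then C else 0) = Lprod p \<gamma> (Umat p \<gamma>) i k)"

definition darboux_transform :: "nat \<Rightarrow> complex \<Rightarrow> (nat \<Rightarrow> complex) \<Rightarrow> imat" where
  "darboux_transform p C \<gamma> i k =
     (if i = k then C else 0) + mmul (Umat p \<gamma>) (Lprod p \<gamma> imat_id) i k"

definition lin_functional :: "(complex poly \<Rightarrow> complex) \<Rightarrow> bool" where
  "lin_functional \<mu> \<longleftrightarrow> (\<forall>q r. \<mu> (q + r) = \<mu> q + \<mu> r) \<and> (\<forall>c q. \<mu> (smult c q) = c * \<mu> q)"

definition p_orth :: "nat \<Rightarrow> (nat \<Rightarrow> complex poly \<Rightarrow> complex) \<Rightarrow> (nat \<Rightarrow> complex poly) \<Rightarrow> bool" where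
  "p_orth p \<nu> Q \<longleftrightarrow>
     (\<forall>r\<in>{1..p}. lin_functional (\<nu> r)) \<and>
     (\<forall>r\<in>{1..p}. \<forall>k::nat.
        (\<forall>n. n \<ge> k * p + r \<longrightarrow> \<nu> r (monom 1 k * Q n) = 0) \<and>
        \<nu> r (monom 1 k * Q (k * p + r - 1)) \<noteq> 0)"

end

theory Submission
  imports Defs
begin

lemma smult_sum2: "smult c (\<Sum>i\<in>S. f i) = (\<Sum>i\<in>S. smult c (f i))"
  by (induction S rule: infinite_finite_induct) (auto simp: smult_add_right)

definition app :: "imat \<Rightarrow> (nat \<Rightarrow> complex poly) \<Rightarrow> nat \<Rightarrow> complex poly" where
  "app A u i = (\<Sum>j\<in>{j. A i j \<noteq> 0}. smult (A i j) (u j))"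

definition rowfin :: "imat \<Rightarrow> bool" where
  "rowfin A \<longleftrightarrow> (\<forall>i. finite {j. A i j \<noteq> 0})"

lemma app_eq: "finite F \<Longrightarrow> {j. A i j \<noteq> 0} \<subseteq> F \<Longrightarrow> app A u i = (\<Sum>j\<in>F. smult (A i j) (u j))"
  unfolding app_def by (rule sum.mono_neutral_left) auto

lemma mmul_eq: "finite F \<Longrightarrow> {j. A i j \<noteq> 0} \<subseteq> F \<Longrightarrow> mmul A B i k = (\<Sum>j\<in>F. A i j * B j k)"
  unfolding mmul_def by (rule sum.mono_neutral_left) auto

lemma rowfin_mmul:
  assumes "rowfin A" "rowfin B" shows "rowfin (mmul A B)"
  unfolding rowfin_def
proof
  fix i
  have "{k. mmul A B i k \<noteq> 0} \<subseteq> (\<Union>j\<in>{j. A i j \<noteq> 0}. {k. B j k \<noteq> 0})"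
  proof
    fix k assume "k \<in> {k. mmul A B i k \<noteq> 0}"
    then have "(\<Sum>j\<in>{j. A i j \<noteq> 0}. A i j * B j k) \<noteq> 0" by (simp add: mmul_def)
    then obtain j where "j \<in> {j. A i j \<noteq> 0}" "A i j * B j k \<noteq> 0"
      by (rule sum.not_neutral_contains_not_neutral)
    then have "A i j \<noteq> 0" "B j k \<noteq> 0" by auto
    then show "k \<in> (\<Union>j\<in>{j. A i j \<noteq> 0}. {k. B j k \<noteq> 0})" by blast
  qed
  moreover have "finite (\<Union>j\<in>{j. A i j \<noteq> 0}. {k. B j k \<noteq> 0})"
    using assms unfolding rowfin_def by blast
  ultimately show "finite {k. mmul A B i k \<noteq> 0}" by (rule finite_subset)
qed

lemma app_mmul:
  assumes "rowfin A" "rowfin B" shows "app (mmul A B) u i = app A (app B u) i"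
proof -
  define S where "S = {j. A i j \<noteq> 0}"
  define T where "T = (\<Union>j\<in>S. {k. B j k \<noteq> 0})"
  have fS: "finite S" using assms unfolding rowfin_def S_def by blast
  have fT: "finite T" using assms fS unfolding rowfin_def T_def by blast
  have sub: "{k. mmul A B i k \<noteq> 0} \<subseteq> T"
  proof
    fix k assume "k \<in> {k. mmul A B i k \<noteq> 0}"
    then have "(\<Sum>j\<in>S. A i j * B j k) \<noteq> 0" by (simp add: mmul_def S_def)
    then obtain j where "j \<in> S" "A i j * B j k \<noteq> 0"
      by (rule sum.not_neutral_contains_not_neutral)
    then have "j \<in> S" "k \<in> {k. B j k \<noteq> 0}" by auto
    then show "k \<in> T" unfolding T_def by (rule UN_I)
  qed
  have "app (mmul A B) u i = (\<Sum>k\<in>T. smult (mmul A B i k) (u k))"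
    by (rule app_eq[of T "mmul A B" i u, OF fT sub])
  also have "\<dots> = (\<Sum>k\<in>T. \<Sum>j\<in>S. smult (A i j) (smult (B j k) (u k)))"
    by (simp add: mmul_def S_def smult_sum)
  also have "\<dots> = (\<Sum>j\<in>S. \<Sum>k\<in>T. smult (A i j) (smult (B j k) (u k)))"
    by (rule sum.swap)
  also have "\<dots> = (\<Sum>j\<in>S. smult (A i j) (app B u j))"
  proof (rule sum.cong[OF refl])
    fix j assume "j \<in> S"
    then have "{k. B j k \<noteq> 0} \<subseteq> T" unfolding T_def by blast
    then show "(\<Sum>k\<in>T. smult (A i j) (smult (B j k) (u k))) = smult (A i j) (app B u j)"
      by (simp add: app_eq[OF fT] smult_sum2)
  qed
  also have "\<dots> = app A (app B u) i" by (simp add: app_def S_def)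
  finally show ?thesis .
qed

lemma supp_Lmat: "{k. Lmat p \<gamma> j i k \<noteq> 0} \<subseteq> {..i}"
  by (auto simp: Lmat_def split: if_splits)
lemma supp_Umat: "{k. Umat p \<gamma> i k \<noteq> 0} \<subseteq> {i, Suc i}"
  by (auto simp: Umat_def split: if_splits)
lemma supp_id: "{k. imat_id i k \<noteq> 0} \<subseteq> {i}"
  by (auto simp: imat_id_def split: if_splits)

lemma rowfin_Lmat: "rowfin (Lmat p \<gamma> j)"
  unfolding rowfin_def by (intro allI finite_subset[OF supp_Lmat]) simp
lemma rowfin_Umat: "rowfin (Umat p \<gamma>)"
  unfolding rowfin_def by (intro allI finite_subset[OF supp_Umat]) simp
lemma rowfin_id: "rowfin imat_id"
  unfolding rowfin_def by (intro allI finite_subset[OF supp_id]) simp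

lemma app_id: "app imat_id u i = u i"
  using app_eq[of "{i}" imat_id i u, OF _ supp_id] by (simp add: imat_id_def)

lemma LP:
  assumes "rowfin M"
  shows "rowfin (foldr (\<lambda>j N. mmul (Lmat p \<gamma> j) N) xs M) \<and>
         app (foldr (\<lambda>j N. mmul (Lmat p \<gamma> j) N) xs M) u
           = foldr (\<lambda>j w. app (Lmat p \<gamma> j) w) xs (app M u)"
proof (induction xs)
  case Nil then show ?case using assms by simp
next
  case (Cons x xs)
  let ?N = "foldr (\<lambda>j N. mmul (Lmat p \<gamma> j) N) xs M"
  have r: "rowfin ?N" using Cons.IH by (rule conjunct1)
  have a: "app ?N u = foldr (\<lambda>j w. app (Lmat p \<gamma> j) w) xs (app M u)"
    using Cons.IH by (rule conjunct2)
  have b: "app (mmul (Lmat p \<gamma> x) ?N) u = app (Lmat p \<gamma> x) (app ?N u)"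
    by (rule ext, rule app_mmul[OF rowfin_Lmat r])
  have e1: "foldr (\<lambda>j N. mmul (Lmat p \<gamma> j) N) (x#xs) M = mmul (Lmat p \<gamma> x) ?N" by simp
  have e2: "foldr (\<lambda>j w. app (Lmat p \<gamma> j) w) (x#xs) (app M u) = app (Lmat p \<gamma> x) (foldr (\<lambda>j w. app (Lmat p \<gamma> j) w) xs (app M u))" by simp
  show ?case unfolding e1 e2 using rowfin_mmul[OF rowfin_Lmat r] b a by simp
qed

lemma LP_tri:
  "(\<forall>i k. i < k \<longrightarrow> foldr (\<lambda>j N. mmul (Lmat p \<gamma> j) N) xs imat_id i k = 0) \<and>
   (\<forall>i. foldr (\<lambda>j N. mmul (Lmat p \<gamma> j) N) xs imat_id i i = 1)"
proof (induction xs)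
  case Nil then show ?case by (simp add: imat_id_def)
next
  case (Cons x xs)
  define M where "M = foldr (\<lambda>j N. mmul (Lmat p \<gamma> j) N) xs imat_id"
  have up: "\<And>i k. i < k \<Longrightarrow> M i k = 0" and dg: "\<And>i. M i i = 1"
    using Cons unfolding M_def by auto
  have e: "\<And>i k. mmul (Lmat p \<gamma> x) M i k = (\<Sum>j\<in>{..i}. Lmat p \<gamma> x i j * M j k)"
    by (rule mmul_eq[OF _ supp_Lmat]) simp
  have 1: "mmul (Lmat p \<gamma> x) M i k = 0" if "i < k" for i k
    unfolding e using that up by (auto intro!: sum.neutral)
  have 2: "mmul (Lmat p \<gamma> x) M i i = 1" for i
  proof -
    have "(\<Sum>j\<in>{..i}. Lmat p \<gamma> x i j * M j i) = (\<Sum>j\<in>{i}. Lmat p \<gamma> x i j * M j i)"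
      by (rule sum.mono_neutral_right) (auto simp: up)
    then show ?thesis unfolding e by (simp add: dg Lmat_def)
  qed
  show ?case using 1 2 by (simp add: M_def)
qed

lemma roots_L:
  assumes "\<And>n. poly (app (Lmat p \<gamma> j) u n) C = 0"
  shows "poly (u n) C = 0"
proof (induction n)
  case 0
  have "app (Lmat p \<gamma> j) u 0 = (\<Sum>k\<in>{0}. smult (Lmat p \<gamma> j 0 k) (u k))"
    by (rule app_eq) (auto simp: Lmat_def split: if_splits)
  then show ?case using assms[of 0] by (simp add: Lmat_def)
next
  case (Suc m)
  have "app (Lmat p \<gamma> j) u (Suc m) = (\<Sum>k\<in>{m, Suc m}. smult (Lmat p \<gamma> j (Suc m) k) (u k))"
    by (rule app_eq) (auto simp: Lmat_def split: if_splits)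
  then show ?case using assms[of "Suc m"] Suc by (simp add: Lmat_def)
qed

lemma roots_LA:
  assumes "\<And>n. poly (foldr (\<lambda>j w. app (Lmat p \<gamma> j) w) xs u n) C = 0"
  shows "poly (u n) C = 0"
  using assms
proof (induction xs arbitrary: n)
  case Nil then show ?case by simp
next
  case (Cons x xs)
  show ?case
    by (rule Cons.IH) (rule roots_L, use Cons.prems in simp)
qed

lemma app_scale: "app A (\<lambda>m. q * u m) i = q * app A u i"
  by (simp only: app_def sum_distrib_left mult_smult_right)

lemma lin1: "[:- c, 1:] * q = [:0, 1:] * q - smult c (q :: complex poly)"
proof -
  have "[:- c, 1:] = [:0,1:] - [:c:]" by (simp add: algebra_simps)
  then show ?thesis by (simp add: left_diff_distrib)
qed

theorem lemma4:
  fixes p :: nat and a :: imat and C :: complex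
    and P Pp :: "nat \<Rightarrow> complex poly" and \<gamma> :: "nat \<Rightarrow> complex"
    and \<nu> :: "nat \<Rightarrow> complex poly \<Rightarrow> complex"
  assumes p_pos: "p \<ge> 1"
    and super: "\<And>n. a n (n + 1) = 1"
    and band_up: "\<And>n m. m > n + 1 \<Longrightarrow> a n m = 0"
    and band_low: "\<And>n m. m + p < n \<Longrightarrow> a n m = 0"
    and sub_nz: "\<And>n. a (n + p) n \<noteq> 0"
    and P0: "P 0 = 1"
    and Prec: "\<And>n. P (Suc n) = [:- a n n, 1:] * P n
                 - (\<Sum>i\<in>{1..p}. if i \<le> n then smult (a n (n - i)) (P (n - i)) else 0)"
    and C_ok: "\<And>n. n \<ge> 1 \<Longrightarrow> poly (P n) C \<noteq> 0"
    and orth: "p_orth p \<nu> P"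
    and fact: "darboux_factorization p a C \<gamma>"
    and Pp0: "Pp 0 = 1"
    and Pp_eig: "\<And>n. (\<Sum>m\<in>{m. darboux_transform p C \<gamma> n m \<noteq> 0}.
                        smult (darboux_transform p C \<gamma> n m) (Pp m)) = [:0, 1:] * Pp n"
  shows "p_orth p (\<lambda>r q. \<nu> r ([:- C, 1:] * q)) Pp"
proof -
  define U where "U = Umat p \<gamma>"
  define xs where "xs = [1..<p+1]"
  define LA where "LA = (\<lambda>u. foldr (\<lambda>j w. app (Lmat p \<gamma> j) w) xs u)"
  define M0 where "M0 = Lprod p \<gamma> imat_id"
  define Jp where "Jp = darboux_transform p C \<gamma>"
  define g where "g n = \<gamma> (n * (p + 1) + 1)" for n
  define w where "w = app U P"
  have rU: "rowfin U" unfolding U_def by (rule rowfin_Umat)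
  have w_eq: "w n = smult (g n) (P n) + P (Suc n)" for n
  proof -
    have "app U P n = (\<Sum>k\<in>{n, Suc n}. smult (U n k) (P k))"
      unfolding U_def by (rule app_eq[OF _ supp_Umat]) simp
    then show ?thesis by (simp add: w_def U_def Umat_def g_def)
  qed
  have JP: "(\<Sum>m\<in>{..Suc n}. smult (a n m) (P m)) = [:0,1:] * P n" for n
  proof -
    define f where "f m = smult (a n m) (P m)" for m
    define S where "S = (\<Sum>i\<in>{1..p}. if i \<le> n then smult (a n (n - i)) (P (n - i)) else 0)"
    have PS: "P (Suc n) = [:- a n n, 1:] * P n - S" using Prec[of n] by (simp add: S_def)
    have bl: "a n (n - i) = 0" if "p < i" "i \<le> n" for i
      by (rule band_low) (use that in simp)
    have "(\<Sum>m<n. f m) = (\<Sum>i<n. f (n - Suc i))" by (rule sum.nat_diff_reindex[symmetric])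
    also have "\<dots> = (\<Sum>i\<in>{Suc 0..n}. f (n - i))" by (subst sum.atLeast1_atMost_eq) simp
    also have "\<dots> = (\<Sum>i\<in>{1..min n p}. f (n - i))"
      by (rule sum.mono_neutral_right) (auto simp: f_def bl)
    also have "\<dots> = (\<Sum>i\<in>{x\<in>{1..p}. x \<le> n}. f (n - i))"
      by (rule sum.cong) auto
    also have "\<dots> = S" unfolding S_def f_def by (subst sum.inter_filter) simp_all
    finally have low: "(\<Sum>m<n. f m) = S" .
    have "(\<Sum>m\<in>{..Suc n}. f m) = (\<Sum>m<n. f m) + f n + f (Suc n)"
      by (simp add: lessThan_Suc_atMost[symmetric])
    also have "\<dots> = S + smult (a n n) (P n) + P (Suc n)"
      using super[of n] low by (simp add: f_def)
    also have "\<dots> = [:0,1:] * P n" by (simp add: PS lin1)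
    finally show ?thesis by (simp add: f_def)
  qed
  have Jm: "app (\<lambda>i k. a i k - (if i = k then C else 0)) P n = [:- C, 1:] * P n" for n
  proof -
    have "app (\<lambda>i k. a i k - (if i = k then C else 0)) P n
        = (\<Sum>m\<in>{..Suc n}. smult (a n m - (if n = m then C else 0)) (P m))"
    proof (rule app_eq)
      show "{j. a n j - (if n = j then C else 0) \<noteq> 0} \<subseteq> {..Suc n}"
      proof
        fix m assume m: "m \<in> {j. a n j - (if n = j then C else 0) \<noteq> 0}"
        show "m \<in> {..Suc n}"
        proof (rule ccontr)
          assume "m \<notin> {..Suc n}"
          then have "m > n + 1" by simp
          then show False using m band_up[of n m] by simp
        qed
      qed
    qed simp
    also have "\<dots> = (\<Sum>m\<in>{..Suc n}. smult (a n m) (P m))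
                    - (\<Sum>m\<in>{..Suc n}. (if n = m then smult C (P m) else 0))"
      by (simp only: smult_diff_left sum_subtractf) (rule arg_cong[where f="\<lambda>x. _ - x"], rule sum.cong, auto)
    also have "\<dots> = [:0,1:] * P n - smult C (P n)"
      by (simp del: sum.atMost_Suc add: JP)
    also have "\<dots> = [:- C, 1:] * P n" by (simp add: lin1)
    finally show ?thesis .
  qed
  have fac: "(\<lambda>i k. a i k - (if i = k then C else 0)) = Lprod p \<gamma> U"
    using fact unfolding darboux_factorization_def U_def by (intro ext) auto
  have LAw: "LA w = (\<lambda>n. [:- C, 1:] * P n)"
  proof -
    have "app (Lprod p \<gamma> U) P = LA (app U P)"
      unfolding Lprod_def LA_def xs_def using LP[OF rU] by blast
    then show ?thesis using Jm unfolding fac w_def by (intro ext) simp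
  qed
  have roots: "poly (w n) C = 0" for n
    by (rule roots_LA[of p \<gamma> xs w C]) (simp add: LAw[unfolded LA_def])
  define Q where "Q n = w n div [:- C, 1:]" for n
  have wQ: "w n = [:- C, 1:] * Q n" for n
  proof -
    have "[:- C, 1:] dvd w n" using roots[of n] by (simp add: poly_eq_0_iff_dvd)
    then show ?thesis unfolding Q_def by (rule dvd_mult_div_cancel[symmetric])
  qed
  have rM0: "rowfin M0" and appM0: "app M0 u = LA u" for u
  proof -
    have "rowfin M0 \<and> app M0 u = LA (app imat_id u)"
      unfolding M0_def Lprod_def LA_def xs_def by (rule LP[OF rowfin_id])
    moreover have "app imat_id u = u" by (rule ext, rule app_id)
    ultimately show "rowfin M0" "app M0 u = LA u" by simp_all
  qed
  have tri_up: "M0 i k = 0" if "i < k" for i k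
    using LP_tri[of p \<gamma> xs] that unfolding M0_def Lprod_def xs_def by blast
  have tri_d: "M0 i i = 1" for i
    using LP_tri[of p \<gamma> xs] unfolding M0_def Lprod_def xs_def by blast
  have mUM: "mmul U M0 n m = g n * M0 n m + M0 (Suc n) m" for n m
  proof -
    have "mmul U M0 n m = (\<Sum>j\<in>{n, Suc n}. U n j * M0 j m)"
      unfolding U_def by (rule mmul_eq[OF _ supp_Umat]) simp
    then show ?thesis by (simp add: U_def Umat_def g_def)
  qed
  have Jp_e: "Jp n m = (if n = m then C else 0) + mmul U M0 n m" for n m
    unfolding Jp_def darboux_transform_def U_def M0_def by simp
  have mUM_up: "mmul U M0 n m = 0" if "Suc n < m" for n m
    using that by (simp add: mUM tri_up)
  have Jp_up: "Jp n m = 0" if "Suc n < m" for n m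
    using that by (simp add: Jp_e mUM_up)
  have Jp_sup: "Jp n (Suc n) = 1" for n
    by (simp add: Jp_e mUM tri_up tri_d)
  have suppJ: "{m. Jp n m \<noteq> 0} \<subseteq> {..Suc n}" for n
    using Jp_up by (force simp: not_le[symmetric])
  have suppM: "{m. mmul U M0 n m \<noteq> 0} \<subseteq> {..Suc n}" for n
    using mUM_up by (force simp: not_le[symmetric])
  have app_Jp: "app Jp u n = smult C (u n) + app U (LA u) n" for u n
  proof -
    have "app Jp u n = (\<Sum>m\<in>{..Suc n}. smult (Jp n m) (u m))"
      by (rule app_eq[OF _ suppJ]) simp
    also have "\<dots> = (\<Sum>m\<in>{..Suc n}. (if n = m then smult C (u m) else 0))
                    + (\<Sum>m\<in>{..Suc n}. smult (mmul U M0 n m) (u m))"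
      by (simp only: Jp_e smult_add_left sum.distrib) (rule arg_cong[where f="\<lambda>x. x + _"], rule sum.cong, auto)
    also have "\<dots> = smult C (u n) + app (mmul U M0) u n"
    proof -
      have "(\<Sum>m\<in>{..Suc n}. (if n = m then smult C (u m) else 0)) = smult C (u n)" by simp
      moreover have "(\<Sum>m\<in>{..Suc n}. smult (mmul U M0 n m) (u m)) = app (mmul U M0) u n"
        by (rule app_eq[OF _ suppM, symmetric]) simp
      ultimately show ?thesis by simp
    qed
    also have "app (mmul U M0) u n = app U (app M0 u) n"
      by (rule app_mmul[OF rU rM0])
    finally show ?thesis by (simp add: appM0)
  qed
  have Jw: "app Jp w n = [:0,1:] * w n" for n
  proof -
    have "app U (LA w) n = [:- C, 1:] * w n"
      unfolding LAw unfolding w_def by (rule app_scale)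
    then show ?thesis by (simp add: app_Jp lin1)
  qed
  have wfun: "w = (\<lambda>m. [:- C, 1:] * Q m)" by (rule ext, rule wQ)
  have JQ: "app Jp Q n = [:0,1:] * Q n" for n
  proof -
    have "[:- C, 1:] * app Jp Q n = app Jp w n"
      unfolding wfun by (rule app_scale[symmetric])
    also have "\<dots> = [:- C, 1:] * ([:0,1:] * Q n)" by (simp add: Jw wQ algebra_simps)
    finally have "[:- C, 1:] * app Jp Q n = [:- C, 1:] * ([:0,1:] * Q n)" .
    moreover have nz: "[:- C, 1:] \<noteq> (0::complex poly)" by simp
    ultimately show ?thesis by (simp only: mult_left_cancel[OF nz])
  qed
  have Q0: "Q 0 = 1"
  proof -
    have P1: "P (Suc 0) = [:- a 0 0, 1:]" using Prec[of 0] by (simp add: P0)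
    have w0: "w 0 = [:g 0 - a 0 0, 1:]" by (simp add: w_eq P0 P1)
    have "g 0 - a 0 0 + C = 0" using roots[of 0] by (simp add: w0)
    then have "g 0 - a 0 0 = - C" by (simp add: algebra_simps eq_neg_iff_add_eq_0)
    then have "[:- C, 1:] * Q 0 = [:- C, 1:] * 1" using w0 wQ[of 0] by simp
    moreover have nz: "[:- C, 1:] \<noteq> (0::complex poly)" by simp
    ultimately show ?thesis by (simp only: mult_left_cancel[OF nz])
  qed
  have recur: "u (Suc n) = [:0,1:] * u n - (\<Sum>m\<le>n. smult (Jp n m) (u m))"
    if hu: "\<And>n. app Jp u n = [:0,1:] * u n" for u n
  proof -
    have "app Jp u n = (\<Sum>m\<in>{..Suc n}. smult (Jp n m) (u m))"
      by (rule app_eq[OF _ suppJ]) simp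
    also have "\<dots> = (\<Sum>m\<le>n. smult (Jp n m) (u m)) + u (Suc n)"
      by (simp add: Jp_sup)
    finally show ?thesis using hu[of n] by (simp add: algebra_simps)
  qed
  have PpJ: "app Jp Pp n = [:0,1:] * Pp n" for n
    using Pp_eig[of n] unfolding app_def Jp_def .
  have PQ: "\<forall>m\<le>n. Pp m = Q m" for n
  proof (induction n)
    case 0 then show ?case by (simp add: Pp0 Q0)
  next
    case (Suc n)
    have s: "(\<Sum>m\<le>n. smult (Jp n m) (Pp m)) = (\<Sum>m\<le>n. smult (Jp n m) (Q m))"
      by (rule sum.cong) (use Suc.IH in auto)
    have "Pp (Suc n) = Q (Suc n)"
      unfolding recur[of Pp n, OF PpJ] recur[of Q n, OF JQ] s using Suc.IH by simp
    then show ?case using Suc.IH le_Suc_eq by blast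
  qed
  have PpQ: "Pp n = Q n" for n using PQ[of n] by simp
  have g_nz: "g n \<noteq> 0" for n
  proof
    assume "g n = 0"
    then have "poly (P (Suc n)) C = 0" using roots[of n] by (simp add: w_eq)
    then show False using C_ok[of "Suc n"] by simp
  qed
  have key: "[:- C, 1:] * (monom 1 k * Pp n) = smult (g n) (monom 1 k * P n) + monom 1 k * P (Suc n)"
    for k n
  proof -
    have "[:- C, 1:] * (monom 1 k * Pp n) = monom 1 k * w n"
      by (simp add: PpQ wQ algebra_simps)
    then show ?thesis by (simp add: w_eq algebra_simps)
  qed
  have lin: "lin_functional (\<nu> r)" if "r \<in> {1..p}" for r
    using orth that unfolding p_orth_def by blast
  have ladd: "\<nu> r (q + s) = \<nu> r q + \<nu> r s" and lsm: "\<nu> r (smult c q) = c * \<nu> r q"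
    if "r \<in> {1..p}" for r q s c
    using lin[OF that] unfolding lin_functional_def by blast+
  have o1: "\<nu> r (monom 1 k * P n) = 0" if "r \<in> {1..p}" "n \<ge> k * p + r" for r k n
    using orth that unfolding p_orth_def by blast
  have o2: "\<nu> r (monom 1 k * P (k * p + r - 1)) \<noteq> 0" if "r \<in> {1..p}" for r k
    using orth that unfolding p_orth_def by blast
  have nk: "\<nu> r ([:- C, 1:] * (monom 1 k * Pp n))
      = g n * \<nu> r (monom 1 k * P n) + \<nu> r (monom 1 k * P (Suc n))"
    if "r \<in> {1..p}" for r k n
    unfolding key by (simp add: ladd[OF that] lsm[OF that])
  show ?thesis
    unfolding p_orth_def
  proof (intro conjI ballI allI impI)
    fix r assume r: "r \<in> {1..p}"
    show "lin_functional (\<lambda>q. \<nu> r ([:- C, 1:] * q))"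
      unfolding lin_functional_def
      by (simp add: distrib_left ladd[OF r] lsm[OF r])
  next
    fix r k n assume r: "r \<in> {1..p}" and n: "k * p + r \<le> n"
    show "\<nu> r ([:- C, 1:] * (monom 1 k * Pp n)) = 0"
      using nk[OF r, of k n] o1[OF r, of k n] o1[OF r, of k "Suc n"] n by simp
  next
    fix r k assume r: "r \<in> {1..p}"
    have e: "Suc (k * p + r - 1) = k * p + r" using r by simp
    show "\<nu> r ([:- C, 1:] * (monom 1 k * Pp (k * p + r - 1))) \<noteq> 0"
      using nk[OF r, of k "k * p + r - 1"] o1[OF r, of k "k * p + r"] o2[OF r, of k] g_nz
      unfolding e by simp
  qed
qed

end
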